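(* Let $1<k<n-1$. For the transposition $(1\ 2)\in\mathfrak{S}_2$ and $i_1,i_2,j_1,j_2\in\{1,\dots,n\}$, $$\Delta^{n,k}_{(1\,2)}\big((i_1,i_2),(j_1,j_2)\big)=\delta(i_1,j_1)\delta(i_2,j_2)\frac{1}{k^2}\binom{n-2}{k-2}+\delta(i_1,j_2)\delta(i_2,j_1)\frac{1}{k^2}\binom{n-2}{k-1},$$ which equals $\frac{1}{k^2}\binom{n-1}{k-1}$ if $i_1=i_2=j_1=j_2$; $\frac{1}{k^2}\binom{n-2}{k-1}$ if $i_1=j_2\ne i_2=j_1$; $\frac{1}{k^2}\binom{n-2}{k-2}$ if $i_1=j_1\neq i_2=j_2$; and $0$ otherwise.
   Context: $\mathcal{A}_r=\{(a_1,\dots,a_r)\in\{1,\dots,n\}^{\times r}:a_1<\dots<a_r\}$. For $\bm{i}\in\{1,\dots,n\}^{\times k}$: $\mathrm{sgn}(\bm{i})=0$ if its entries are not all distinct, otherwise the sign of the unique permutation sorting $\bm{i}$ increasingly; $\mathrm{sr}(\bm{i})$ is $\bm{i}$ sorted in nondecreasing order; $(i,\bm{l})=(i,l_1,\dots,l_{k-1})$. For $\sigma\in\mathfrak{S}_p$ and $\bm{i},\bm{j}\in\{1,\dots,n\}^{\times p}$, the fermionic $\Delta$-function is $$\Delta^{n,k}_\sigma(\bm{i},\bm{j})=\frac{1}{k^p}\sum_{\substack{\bm{l}^{(1)}\in\mathcal{A}_{k-1}\\ \bm{l}^{(1)}\not\ni i_1,j_1}}\cdots\sum_{\substack{\bm{l}^{(p)}\in\mathcal{A}_{k-1}\\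 \bm{l}^{(p)}\not\ni i_p,j_p}}\prod_{s=1}^p\mathrm{sgn}(i_s,\bm{l}^{(s)})\mathrm{sgn}(j_s,\bm{l}^{(s)})\ \delta_\sigma\Big(\big(\mathrm{sr}(i_s,\bm{l}^{(s)})\big)_{s=1}^p,\big(\mathrm{sr}(j_s,\bm{l}^{(s)})\big)_{s=1}^p\Big),$$ where "$\bm{l}\not\ni i,j$" means neither $i$ nor $j$ is an entry of $\bm{l}$, and $\delta_\sigma(\bm{a},\bm{b})=\prod_{r=1}^p\delta(a_{\sigma(r)},b_r)$ with $\delta$ the Kronecker delta (equality of sequences). *)

theory Defs
  imports Complex_Main "HOL-Combinatorics.Combinatorics"
begin

text \<open>Sequences in {1..n}^r are represented as lists; position s (1-based) of a list xs
  is xs ! (s - 1).\<close>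

definition incr_seqs :: "nat \<Rightarrow> nat \<Rightarrow> nat list set" where
  "incr_seqs n r = {l. length l = r \<and> sorted_wrt (<) l \<and> set l \<subseteq> {1..n}}"

definition seq_sgn :: "nat list \<Rightarrow> int" where
  "seq_sgn xs = (if distinct xs then
      sign (THE \<pi>. \<pi> permutes {..<length xs} \<and>
                 sorted_wrt (<) (map (\<lambda>t. xs ! \<pi> t) [0..<length xs]))
    else 0)"

text \<open>The fermionic Delta-function. sigma is a permutation of {1..p} with p = length i;
  i and j are sequences of length p.\<close>
definition fermionic_Delta ::
  "nat \<Rightarrow> nat \<Rightarrow> (nat \<Rightarrow> nat) \<Rightarrow> nat list \<Rightarrow> nat list \<Rightarrow> real" where
  "fermionic_Delta n k \<sigma> i j =
    (let p = length i in
     (1 / real k ^ p) *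
     (\<Sum>L \<in> PiE {1..p} (\<lambda>s. {l \<in> incr_seqs n (k - 1).
                                   i ! (s - 1) \<notin> set l \<and> j ! (s - 1) \<notin> set l}).
        (\<Prod>s\<in>{1..p}. real_of_int (seq_sgn (i ! (s - 1) # L s) * seq_sgn (j ! (s - 1) # L s)))
        * of_bool (\<forall>r\<in>{1..p}. sort (i ! (\<sigma> r - 1) # L (\<sigma> r)) = sort (j ! (r - 1) # L r))))"

end

theory Submission
  imports Defs
begin

lemma sort_eq_iff_mset: "sort xs = sort ys \<longleftrightarrow> mset xs = mset ys"
  by (metis mset_sort properties_for_sort sorted_sort)

lemma seq_sgn_sq: "distinct xs \<Longrightarrow> seq_sgn xs * seq_sgn xs = 1"
  by (simp add: seq_sgn_def sign_def)

lemma strict_sorted_eq: "sorted_wrt (<) (a::nat list) \<Longrightarrow> sorted_wrt (<) b \<Longrightarrow> set a = set b \<Longrightarrow> a = b"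
  unfolding strict_sorted_iff using sorted_distinct_set_unique by blast

lemma count_seqs:
  assumes "U \<subseteq> {1..n}"
  shows "card {l \<in> incr_seqs n r. set l \<subseteq> U} = card U choose r"
proof -
  have "bij_betw set {l \<in> incr_seqs n r. set l \<subseteq> U} {A. A \<subseteq> U \<and> card A = r}"
  proof (rule bij_betwI[where g = sorted_list_of_set])
    show "set \<in> {l \<in> incr_seqs n r. set l \<subseteq> U} \<rightarrow> {A. A \<subseteq> U \<and> card A = r}"
      by (auto simp: incr_seqs_def strict_sorted_iff distinct_card)
    show "sorted_list_of_set \<in> {A. A \<subseteq> U \<and> card A = r} \<rightarrow> {l \<in> incr_seqs n r. set l \<subseteq> U}"
    proof
      fix A assume A: "A \<in> {A. A \<subseteq> U \<and> card A = r}"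
      hence f: "finite A" using assms finite_subset[OF _ finite_atLeastAtMost] by blast
      show "sorted_list_of_set A \<in> {l \<in> incr_seqs n r. set l \<subseteq> U}"
        using A f assms by (auto simp: incr_seqs_def)
    qed
    show "sorted_list_of_set (set x) = x" if "x \<in> {l \<in> incr_seqs n r. set l \<subseteq> U}" for x
      using that by (auto simp: incr_seqs_def strict_sorted_iff sorted_list_of_set.idem_if_sorted_distinct)
    show "set (sorted_list_of_set y) = y" if "y \<in> {A. A \<subseteq> U \<and> card A = r}" for y
    proof -
      have "finite y" using that assms finite_subset[OF _ finite_atLeastAtMost] by blast
      thus ?thesis by simp
    qed
  qed
  hence "card {l \<in> incr_seqs n r. set l \<subseteq> U} = card {A. A \<subseteq> U \<and> card A = r}"
    by (rule bij_betw_same_card)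
  also have "\<dots> = card U choose r"
    using assms finite_subset[OF _ finite_atLeastAtMost] by (intro n_subsets) auto
  finally show ?thesis .
qed

lemma fin_seqs: "finite (incr_seqs n r)"
proof -
  have "incr_seqs n r \<subseteq> {l. set l \<subseteq> {1..n} \<and> length l = r}"
    by (auto simp: incr_seqs_def)
  thus ?thesis using finite_lists_length_eq[of "{1..n}" r] finite_subset by blast
qed

lemma bij_pair_PiE:
  "bij_betw (\<lambda>(a,b). \<lambda>s\<in>{1,2::nat}. if s = 1 then a else b) (F 1 \<times> F 2) (PiE {1,2} F)"
proof (rule bij_betwI[where g = "\<lambda>L. (L 1, L 2)"])
  show "(\<lambda>(a,b). \<lambda>s\<in>{1,2::nat}. if s = 1 then a else b) \<in> F 1 \<times> F 2 \<rightarrow> PiE {1,2} F"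
    by (auto simp: PiE_def extensional_def)
  show "(\<lambda>L. (L 1, L 2)) \<in> PiE {1,2} F \<rightarrow> F 1 \<times> F 2" by auto
  show "(\<lambda>L. (L 1, L 2)) ((\<lambda>(a,b). \<lambda>s\<in>{1,2::nat}. if s = 1 then a else b) x) = x" for x
    by (cases x) auto
  show "(\<lambda>(a,b). \<lambda>s\<in>{1,2::nat}. if s = 1 then a else b) ((\<lambda>L. (L 1, L 2)) y) = y"
    if "y \<in> PiE {1,2} F" for y
    using that by (auto simp: PiE_def extensional_def fun_eq_iff)
qed

lemma delta_pairs:
  "fermionic_Delta n k (Transposition.transpose 1 2) [i1, i2] [j1, j2] =
   1 / real k ^ 2 * (\<Sum>(a,b) \<in> {l \<in> incr_seqs n (k - 1). i1 \<notin> set l \<and> j1 \<notin> set l}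
                            \<times> {l \<in> incr_seqs n (k - 1). i2 \<notin> set l \<and> j2 \<notin> set l}.
      real_of_int (seq_sgn (i1 # a) * seq_sgn (j1 # a)) * real_of_int (seq_sgn (i2 # b) * seq_sgn (j2 # b))
      * of_bool (sort (i2 # b) = sort (j1 # a) \<and> sort (i1 # a) = sort (j2 # b)))"
proof -
  define F where "F = (\<lambda>s. {l \<in> incr_seqs n (k - 1). [i1, i2] ! (s - 1) \<notin> set l \<and> [j1, j2] ! (s - 1) \<notin> set l})"
  have e12: "{1..2::nat} = {1,2}" by auto
  have F1: "F 1 = {l \<in> incr_seqs n (k - 1). i1 \<notin> set l \<and> j1 \<notin> set l}" by (simp add: F_def)
  have F2: "F 2 = {l \<in> incr_seqs n (k - 1). i2 \<notin> set l \<and> j2 \<notin> set l}" by (simp add: F_def)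
  have "fermionic_Delta n k (Transposition.transpose 1 2) [i1, i2] [j1, j2] =
     1 / real k ^ 2 * (\<Sum>L \<in> PiE {1,2} F.
        (\<Prod>s\<in>{1,2}. real_of_int (seq_sgn ([i1,i2] ! (s - 1) # L s) * seq_sgn ([j1,j2] ! (s - 1) # L s)))
        * of_bool (\<forall>r\<in>{1,2}. sort ([i1,i2] ! (Transposition.transpose 1 2 r - 1) # L (Transposition.transpose 1 2 r)) = sort ([j1,j2] ! (r - 1) # L r)))"
  proof -
    have len: "length [i1,i2] = 2" by simp
    show ?thesis unfolding fermionic_Delta_def Let_def F_def by (simp only: len e12)
  qed
  also have "\<dots> = 1 / real k ^ 2 * (\<Sum>(a,b) \<in> F 1 \<times> F 2.
      real_of_int (seq_sgn (i1 # a) * seq_sgn (j1 # a)) * real_of_int (seq_sgn (i2 # b) * seq_sgn (j2 # b))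
      * of_bool (sort (i2 # b) = sort (j1 # a) \<and> sort (i1 # a) = sort (j2 # b)))"
    by (subst sum.reindex_bij_betw[OF bij_pair_PiE, symmetric])
       (auto intro!: sum.cong simp: transpose_def)
  finally show ?thesis unfolding F1 F2 .
qed
lemma pair_mset: "{#i1, i2#} = {#j1, (j2::nat)#} \<Longrightarrow> (i1 = j1 \<and> i2 = j2) \<or> (i1 = j2 \<and> i2 = j1)"
  by (auto simp: add_eq_conv_ex)

lemma summand:
  assumes a: "a \<in> {l \<in> incr_seqs n (k - 1). i1 \<notin> set l \<and> j1 \<notin> set l}"
    and b: "b \<in> {l \<in> incr_seqs n (k - 1). i2 \<notin> set l \<and> j2 \<notin> set l}"
  shows "real_of_int (seq_sgn (i1 # a) * seq_sgn (j1 # a)) * real_of_int (seq_sgn (i2 # b) * seq_sgn (j2 # b))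
      * of_bool (sort (i2 # b) = sort (j1 # a) \<and> sort (i1 # a) = sort (j2 # b))
    = of_bool (insert i2 (set b) = insert j1 (set a) \<and> insert i1 (set a) = insert j2 (set b))"
proof -
  have sa: "sorted_wrt (<) a" and sb: "sorted_wrt (<) b" using a b by (auto simp: incr_seqs_def)
  hence "distinct a" "distinct b" using strict_sorted_iff by blast+
  hence d: "distinct (i1 # a)" "distinct (j1 # a)" "distinct (i2 # b)" "distinct (j2 # b)"
    using a b by auto
  have c1: "sort (i2 # b) = sort (j1 # a) \<longleftrightarrow> insert i2 (set b) = insert j1 (set a)"
    using set_eq_iff_mset_eq_distinct[OF d(3) d(2)] sort_eq_iff_mset[of "i2 # b" "j1 # a"]
    by (metis set_simps(2))
  have c2: "sort (i1 # a) = sort (j2 # b) \<longleftrightarrow> insert i1 (set a) = insert j2 (set b)"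
    using set_eq_iff_mset_eq_distinct[OF d(1) d(4)] sort_eq_iff_mset[of "i1 # a" "j2 # b"]
    by (metis set_simps(2))
  show ?thesis
  proof (cases "insert i2 (set b) = insert j1 (set a) \<and> insert i1 (set a) = insert j2 (set b)")
    case False thus ?thesis using c1 c2 by simp
  next
    case True
    hence m1: "add_mset i2 (mset b) = add_mset j1 (mset a)" and m2: "add_mset i1 (mset a) = add_mset j2 (mset b)"
      using c1 c2 sort_eq_iff_mset[of "i2 # b" "j1 # a"] sort_eq_iff_mset[of "i1 # a" "j2 # b"]
      by (metis mset.simps(2))+
    have "{#i1, i2#} + (mset a + mset b) = {#j1, j2#} + (mset a + mset b)"
      using arg_cong2[OF m1 m2, of "(+)"] by (simp add: ac_simps)
    hence "{#i1, i2#} = {#j1, j2#}" by simp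
    hence "(i1 = j1 \<and> i2 = j2) \<or> (i1 = j2 \<and> i2 = j1)" by (rule pair_mset)
    hence "seq_sgn (i1 # a) * seq_sgn (j1 # a) * (seq_sgn (i2 # b) * seq_sgn (j2 # b)) = 1"
    proof
      assume "i1 = j1 \<and> i2 = j2"
      thus ?thesis using seq_sgn_sq[OF d(1)] seq_sgn_sq[OF d(3)] by simp
    next
      assume e: "i1 = j2 \<and> i2 = j1"
      hence "mset a = mset b" using m1 by simp
      hence "set a = set b" by (metis set_mset_mset)
      hence "a = b" using strict_sorted_eq sa sb by blast
      thus ?thesis using e seq_sgn_sq[OF d(1)] seq_sgn_sq[OF d(3)]
        by (metis mult.assoc mult.commute mult_1_right)
    qed
    hence "real_of_int (seq_sgn (i1 # a) * seq_sgn (j1 # a)) * real_of_int (seq_sgn (i2 # b) * seq_sgn (j2 # b)) = 1"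
      by (metis of_int_1 of_int_mult)
    thus ?thesis using True c1 c2 by simp
  qed
qed
lemma pair_cases:
  assumes a: "a \<in> {l \<in> incr_seqs n (k - 1). i1 \<notin> set l \<and> j1 \<notin> set l}"
    and b: "b \<in> {l \<in> incr_seqs n (k - 1). i2 \<notin> set l \<and> j2 \<notin> set l}"
    and P: "insert i2 (set b) = insert j1 (set a) \<and> insert i1 (set a) = insert j2 (set b)"
  shows "(i1 = j1 \<and> i2 = j2) \<or> (i1 = j2 \<and> i2 = j1)"
proof -
  have sa: "sorted_wrt (<) a" and sb: "sorted_wrt (<) b" using a b by (auto simp: incr_seqs_def)
  hence "distinct a" "distinct b" using strict_sorted_iff by blast+
  hence d: "distinct (i1 # a)" "distinct (j1 # a)" "distinct (i2 # b)" "distinct (j2 # b)"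
    using a b by auto
  have m1: "add_mset i2 (mset b) = add_mset j1 (mset a)"
    using set_eq_iff_mset_eq_distinct[OF d(3) d(2)] P by (metis set_simps(2) mset.simps(2))
  have m2: "add_mset i1 (mset a) = add_mset j2 (mset b)"
    using set_eq_iff_mset_eq_distinct[OF d(1) d(4)] P by (metis set_simps(2) mset.simps(2))
  have "{#i1, i2#} + (mset a + mset b) = {#j1, j2#} + (mset a + mset b)"
    using arg_cong2[OF m1 m2, of "(+)"] by (simp add: ac_simps)
  hence "{#i1, i2#} = {#j1, j2#}" by simp
  thus ?thesis by (rule pair_mset)
qed

lemma diag_image:
  assumes "\<forall>a\<in>G. sorted_wrt (<) (a::nat list)"
  shows "card ((G \<times> G) \<inter> {x. case x of (a, b) \<Rightarrow> set a = set b}) = card G"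
proof -
  have "(G \<times> G) \<inter> {x. case x of (a, b) \<Rightarrow> set a = set b} = (\<lambda>a. (a,a)) ` G"
    using assms strict_sorted_eq by auto
  moreover have "inj_on (\<lambda>a. (a,a)) G" by (auto simp: inj_on_def)
  ultimately show ?thesis by (simp add: card_image)
qed

lemma count_sub:
  assumes "i \<in> {1..n}"
  shows "card {l \<in> incr_seqs n r. i \<notin> set l} = (n - 1) choose r"
proof -
  have "{l \<in> incr_seqs n r. i \<notin> set l} = {l \<in> incr_seqs n r. set l \<subseteq> {1..n} - {i}}"
    by (auto simp: incr_seqs_def)
  thus ?thesis using count_seqs[of "{1..n} - {i}" n r] assms by simp
qed

lemma count_sub2:
  assumes "i \<in> {1..n}" "j \<in> {1..n}" "i \<noteq> j"
  shows "card {l \<in> incr_seqs n r. i \<notin> set l \<and> j \<notin> set l} = (n - 2) choose r"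
proof -
  have "{l \<in> incr_seqs n r. i \<notin> set l \<and> j \<notin> set l} = {l \<in> incr_seqs n r. set l \<subseteq> {1..n} - {i,j}}"
    by (auto simp: incr_seqs_def)
  moreover have "card ({1..n} - {i,j}) = n - 2" using assms by (simp add: card_Diff_subset)
  ultimately show ?thesis using count_seqs[of "{1..n} - {i,j}" n r] by simp
qed

lemma count_in:
  assumes "i \<in> {1..n}" "j \<in> {1..n}" "i \<noteq> j" "1 \<le> r" "2 \<le> n"
  shows "card {l \<in> incr_seqs n r. i \<notin> set l \<and> j \<in> set l} = (n - 2) choose (r - 1)"
proof -
  have "{l \<in> incr_seqs n r. i \<notin> set l \<and> j \<in> set l} =
        {l \<in> incr_seqs n r. i \<notin> set l} - {l \<in> incr_seqs n r. i \<notin> set l \<and> j \<notin> set l}" (is "?A = _") by auto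
  hence "card {l \<in> incr_seqs n r. i \<notin> set l \<and> j \<in> set l} =
        card {l \<in> incr_seqs n r. i \<notin> set l} - card {l \<in> incr_seqs n r. i \<notin> set l \<and> j \<notin> set l}"
  proof -
    have f: "finite {l \<in> incr_seqs n r. i \<notin> set l \<and> j \<notin> set l}" using fin_seqs[of n r] by simp
    have sub: "{l \<in> incr_seqs n r. i \<notin> set l \<and> j \<notin> set l} \<subseteq> {l \<in> incr_seqs n r. i \<notin> set l}" by auto
    show ?thesis using card_Diff_subset[OF f sub] using \<open>?A = _\<close> by simp
  qed
  also have "\<dots> = ((n - 1) choose r) - ((n - 2) choose r)"
    using count_sub[OF assms(1)] count_sub2[OF assms(1-3)] by simp
  also have "\<dots> = (n - 2) choose (r - 1)"
  proof -
    have "n - 1 = Suc (n - 2)" "r = Suc (r - 1)" using assms by auto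
    hence "(n - 1) choose r = ((n - 2) choose (r - 1)) + ((n - 2) choose r)"
      by (metis binomial_Suc_Suc)
    thus ?thesis by simp
  qed
  finally show ?thesis .
qed
lemma case1_card:
  assumes "i1 \<in> {1..n}" "i2 \<in> {1..n}" "i1 \<noteq> i2"
  shows "card (({l \<in> incr_seqs n r. i1 \<notin> set l} \<times> {l \<in> incr_seqs n r. i2 \<notin> set l}) \<inter>
           {x. case x of (a, b) \<Rightarrow> insert i2 (set b) = insert i1 (set a)})
         = card {l \<in> incr_seqs n r. i1 \<notin> set l \<and> i2 \<in> set l}"
proof -
  define h where "h a = sorted_list_of_set (insert i1 (set a) - {i2})" for a
  define G where "G = {l \<in> incr_seqs n r. i1 \<notin> set l \<and> i2 \<in> set l}"
  have "(({l \<in> incr_seqs n r. i1 \<notin> set l} \<times> {l \<in> incr_seqs n r. i2 \<notin> set l}) \<inter>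
           {x. case x of (a, b) \<Rightarrow> insert i2 (set b) = insert i1 (set a)}) = (\<lambda>a. (a, h a)) ` G"
  proof (intro equalityI subsetI)
    fix x assume x: "x \<in> ({l \<in> incr_seqs n r. i1 \<notin> set l} \<times> {l \<in> incr_seqs n r. i2 \<notin> set l}) \<inter>
           {x. case x of (a, b) \<Rightarrow> insert i2 (set b) = insert i1 (set a)}"
    obtain a b where ab: "x = (a, b)" by fastforce
    have a: "a \<in> incr_seqs n r" "i1 \<notin> set a" and b: "b \<in> incr_seqs n r" "i2 \<notin> set b"
      and P: "insert i2 (set b) = insert i1 (set a)" using x ab by auto
    have "i2 \<in> insert i1 (set a)" using P by blast
    hence "i2 \<in> set a" using assms(3) by simp
    hence aG: "a \<in> G" using a by (simp add: G_def)
    have "set b = insert i1 (set a) - {i2}" using P b(2) by blast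
    moreover have "finite (insert i1 (set a) - {i2})" by simp
    ultimately have "set (h a) = set b" by (simp add: h_def)
    moreover have "sorted_wrt (<) b" using b(1) by (simp add: incr_seqs_def)
    moreover have "sorted_wrt (<) (h a)" by (simp add: h_def)
    ultimately have "h a = b" using strict_sorted_eq by blast
    thus "x \<in> (\<lambda>a. (a, h a)) ` G" using aG ab by blast
  next
    fix x assume "x \<in> (\<lambda>a. (a, h a)) ` G"
    then obtain a where aG: "a \<in> G" and xa: "x = (a, h a)" by blast
    have a: "length a = r" "sorted_wrt (<) a" "set a \<subseteq> {1..n}" "i1 \<notin> set a" "i2 \<in> set a"
      using aG by (auto simp: G_def incr_seqs_def)
    have da: "distinct a" using a(2) strict_sorted_iff by blast
    have sh: "set (h a) = insert i1 (set a) - {i2}" by (simp add: h_def)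
    have "length (h a) = card (insert i1 (set a) - {i2})" by (simp add: h_def)
    also have "\<dots> = r" using a da assms(3) by (simp add: distinct_card)
    finally have "length (h a) = r" .
    hence "h a \<in> incr_seqs n r" using sh a assms(1) strict_sorted_list_of_set
      by (auto simp: incr_seqs_def h_def)
    moreover have "insert i2 (set (h a)) = insert i1 (set a)" using sh a(5) assms(3) by blast
    ultimately show "x \<in> ({l \<in> incr_seqs n r. i1 \<notin> set l} \<times> {l \<in> incr_seqs n r. i2 \<notin> set l}) \<inter>
           {x. case x of (a, b) \<Rightarrow> insert i2 (set b) = insert i1 (set a)}"
      using xa aG sh by (auto simp: G_def)
  qed
  moreover have "inj_on (\<lambda>a. (a, h a)) G" by (auto simp: inj_on_def)
  ultimately show ?thesis by (simp add: card_image G_def)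
qed
lemma final_arith:
  fixes i1 i2 j1 j2 A B P :: nat and c :: real and X :: real
  assumes D: "X = c * real ((if i1 = j1 \<and> i2 = j2 then A else 0) + (if i1 = j2 \<and> i2 = j1 then B else 0))"
   and pascal: "P = A + B"
  shows "X = of_bool (i1 = j1) * of_bool (i2 = j2) * c * real A + of_bool (i1 = j2) * of_bool (i2 = j1) * c * real B
   \<and> X = (if i1 = i2 \<and> i2 = j1 \<and> j1 = j2 then c * real P
            else if i1 = j2 \<and> i2 = j1 \<and> i1 \<noteq> i2 then c * real B
            else if i1 = j1 \<and> i2 = j2 \<and> i1 \<noteq> i2 then c * real A
            else 0)"
  using assms by (auto simp: algebra_simps)

theorem lemma3p5:
  fixes n k i1 i2 j1 j2 :: nat
  assumes "1 < k" and "k < n - 1"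
    and "i1 \<in> {1..n}" and "i2 \<in> {1..n}" and "j1 \<in> {1..n}" and "j2 \<in> {1..n}"
  shows "fermionic_Delta n k (Transposition.transpose 1 2) [i1, i2] [j1, j2] =
           of_bool (i1 = j1) * of_bool (i2 = j2) * (1 / real k ^ 2) * real ((n - 2) choose (k - 2))
         + of_bool (i1 = j2) * of_bool (i2 = j1) * (1 / real k ^ 2) * real ((n - 2) choose (k - 1))
       \<and> fermionic_Delta n k (Transposition.transpose 1 2) [i1, i2] [j1, j2] =
           (if i1 = i2 \<and> i2 = j1 \<and> j1 = j2 then (1 / real k ^ 2) * real ((n - 1) choose (k - 1))
            else if i1 = j2 \<and> i2 = j1 \<and> i1 \<noteq> i2 then (1 / real k ^ 2) * real ((n - 2) choose (k - 1))
            else if i1 = j1 \<and> i2 = j2 \<and> i1 \<noteq> i2 then (1 / real k ^ 2) * real ((n - 2) choose (k - 2))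
            else 0)"
proof -
  define F1 where "F1 = {l \<in> incr_seqs n (k - 1). i1 \<notin> set l \<and> j1 \<notin> set l}"
  define F2 where "F2 = {l \<in> incr_seqs n (k - 1). i2 \<notin> set l \<and> j2 \<notin> set l}"
  define S where "S = (F1 \<times> F2) \<inter> {x. case x of (a, b) \<Rightarrow>
      insert i2 (set b) = insert j1 (set a) \<and> insert i1 (set a) = insert j2 (set b)}"
  have fin: "finite (F1 \<times> F2)" using fin_seqs by (simp add: F1_def F2_def)
  have D: "fermionic_Delta n k (Transposition.transpose 1 2) [i1, i2] [j1, j2] = 1 / real k ^ 2 * real (card S)"
  proof -
    have "fermionic_Delta n k (Transposition.transpose 1 2) [i1, i2] [j1, j2] =
      1 / real k ^ 2 * (\<Sum>x \<in> F1 \<times> F2. of_bool (case x of (a, b) \<Rightarrow>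
      insert i2 (set b) = insert j1 (set a) \<and> insert i1 (set a) = insert j2 (set b)))"
      unfolding delta_pairs F1_def[symmetric] F2_def[symmetric]
    proof (intro arg_cong2[where f = "(*)"] refl sum.cong)
      fix x assume "x \<in> F1 \<times> F2"
      then obtain a b where x: "x = (a, b)" "a \<in> F1" "b \<in> F2" by blast
      show "(case x of (a, b) \<Rightarrow> real_of_int (seq_sgn (i1 # a) * seq_sgn (j1 # a)) *
             real_of_int (seq_sgn (i2 # b) * seq_sgn (j2 # b)) *
             of_bool (sort (i2 # b) = sort (j1 # a) \<and> sort (i1 # a) = sort (j2 # b))) =
            of_bool (case x of (a, b) \<Rightarrow>
      insert i2 (set b) = insert j1 (set a) \<and> insert i1 (set a) = insert j2 (set b))"
        using summand[of a n k i1 j1 b i2 j2] x unfolding F1_def F2_def by simp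
    qed
    also have "\<dots> = 1 / real k ^ 2 * real (card S)"
      unfolding S_def by (simp only: sum_of_bool_eq[OF fin fin])
    finally show ?thesis .
  qed
  have r1: "1 \<le> k - 1" "2 \<le> n" using assms by auto
  have pascal: "(n - 1) choose (k - 1) = ((n - 2) choose (k - 2)) + ((n - 2) choose (k - 1))"
  proof -
    have "n - 1 = Suc (n - 2)" "k - 1 = Suc (k - 2)" using assms by auto
    thus ?thesis by (metis binomial_Suc_Suc)
  qed
  have C: "card S = (if i1 = j1 \<and> i2 = j2 then (n - 2) choose (k - 2) else 0)
                  + (if i1 = j2 \<and> i2 = j1 then (n - 2) choose (k - 1) else 0)"
  proof -
    consider (all) "i1 = i2" "i2 = j1" "j1 = j2"
      | (swap) "i1 = j2" "i2 = j1" "i1 \<noteq> i2"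
      | (ident) "i1 = j1" "i2 = j2" "i1 \<noteq> i2"
      | (none) "\<not> (i1 = j1 \<and> i2 = j2)" "\<not> (i1 = j2 \<and> i2 = j1)"
      by blast
    thus ?thesis
    proof cases
      case all
      define G where "G = {l \<in> incr_seqs n (k - 1). i1 \<notin> set l}"
      have "S = (G \<times> G) \<inter> {x. case x of (a, b) \<Rightarrow> set a = set b}"
        unfolding S_def F1_def F2_def G_def using all by auto
      hence "card S = card G"
        using diag_image[of G] by (simp add: G_def incr_seqs_def)
      also have "\<dots> = (n - 1) choose (k - 1)" using count_sub assms(3) by (simp add: G_def)
      finally show ?thesis using all pascal by simp
    next
      case swap
      define G where "G = {l \<in> incr_seqs n (k - 1). i1 \<notin> set l \<and> i2 \<notin> set l}"
      have "S = (G \<times> G) \<inter> {x. case x of (a, b) \<Rightarrow> set a = set b}"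
        unfolding S_def F1_def F2_def G_def using swap by auto
      hence "card S = card G"
        using diag_image[of G] by (simp add: G_def incr_seqs_def)
      also have "\<dots> = (n - 2) choose (k - 1)" using count_sub2 assms(3,4) swap by (simp add: G_def)
      finally show ?thesis using swap by simp
    next
      case ident
      have "S = (({l \<in> incr_seqs n (k - 1). i1 \<notin> set l} \<times> {l \<in> incr_seqs n (k - 1). i2 \<notin> set l}) \<inter>
           {x. case x of (a, b) \<Rightarrow> insert i2 (set b) = insert i1 (set a)})"
        unfolding S_def F1_def F2_def using ident by auto
      hence "card S = card {l \<in> incr_seqs n (k - 1). i1 \<notin> set l \<and> i2 \<in> set l}"
        using case1_card[OF assms(3,4) ident(3)] by simp
      also have "\<dots> = (n - 2) choose (k - 2)"
        using count_in[OF assms(3,4) ident(3) r1] by (metis diff_diff_left one_add_one)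
      finally show ?thesis using ident by simp
    next
      case none
      have "S = {}"
      proof (rule ccontr)
        assume "S \<noteq> {}"
        then obtain x where "x \<in> S" by blast
        moreover obtain a b where "x = (a, b)" by (cases x)
        ultimately have ab: "(a, b) \<in> S" by simp
        have h1: "a \<in> {l \<in> incr_seqs n (k - 1). i1 \<notin> set l \<and> j1 \<notin> set l}"
          using ab unfolding S_def F1_def by blast
        have h2: "b \<in> {l \<in> incr_seqs n (k - 1). i2 \<notin> set l \<and> j2 \<notin> set l}"
          using ab unfolding S_def F2_def by blast
        have h3: "insert i2 (set b) = insert j1 (set a) \<and> insert i1 (set a) = insert j2 (set b)"
          using ab unfolding S_def by blast
        from pair_cases[OF h1 h2 h3] none show False by simp
      qed
      thus ?thesis unfolding if_not_P[OF none(1)] if_not_P[OF none(2)] by simp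
    qed
  qed
  show ?thesis by (rule final_arith[OF D[unfolded C] pascal])
qed
end
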